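(* Let $A$ be a finite set, $h\ge0$, and let $P$ be a probability measure on $(A^{\mathbb{Z}},\mathfrak{A}^{\mathbb{Z}})$ satisfying condition (B* ) with respect to $h$. Then for every $\varepsilon>0$ there exist subsets $\overline{C}_\varepsilon^{(n)}\subseteq A^{(n)}$, $n\in\mathbb{N}$, and a number $\overline{N}(\varepsilon)$ such that properties (1)–(4) of condition (B* ) hold for $\{\overline{C}_\varepsilon^{(n)}\}$ and $\overline N(\varepsilon)$, and moreover the full asymptotic equipartition property holds: $P^{(n)}(\mathbf{x})\in(e^{-n(h+\varepsilon)},e^{-n(h-\varepsilon)})$ for all $n\ge\overline{N}(\varepsilon)$ and all $\mathbf{x}\in\overline{C}_\varepsilon^{(n)}$.
   Context: $\mathfrak{A}^{\mathbb{Z}}$ is the $\sigma$-field on $A^{\mathbb{Z}}$ generated by cylinder sets. For $n\ge 1$, $A^{(n)}:=\prod_{i=1}^n A$ and $P^{(n)}$ denotes the marginal of $P$ on the coordinates $1,\dots,n$. For $\mathbf{x}=(x_i)_{i=1}^n$ let $\mathbf{x}_\flat:=(x_i)_{i=1}^{n-1}$, and for $C\subseteq A^{(n+1)}$ let $C_\flat:=\{\mathbf{x}_\flat:\mathbf{x}\in C\}$. Condition (B* ) w.r.t. $h$: for every $\varepsilon>0$ there exist subsets $C_\varepsilon^{(n)}\subseteq A^{(n)}$, $n\in\mathbb{N}$, and a number $N(\varepsilon)$ such that (1) $C_\varepsilon^{(n)}=(C_\varepsilon^{(n+1)})_\flat$ for all $n\ge1$; (2) $\#C_\varepsilon^{(n)}\in(e^{n(h-\varepsilon)},e^{n(h+\varepsilon)})$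 for $n\ge N(\varepsilon)$; (3) $P^{(n)}(\mathbf{x})<e^{-n(h-\varepsilon)}$ for all $n\ge N(\varepsilon)$ and all $\mathbf{x}\in C_\varepsilon^{(n)}$; (4) $P^{(n)}(C_\varepsilon^{(n)})>1-\varepsilon$ for all $n\ge1$. *)

theory Defs
  imports "HOL-Probability.Probability"
begin

text \<open>Words of length n over A: the set A^(n), coordinates 1..n stored as list positions 0..n-1.\<close>
definition words :: "'a set \<Rightarrow> nat \<Rightarrow> 'a list set" where
  "words A n = {xs. length xs = n \<and> set xs \<subseteq> A}"

definition window :: "(int \<Rightarrow> 'a) \<Rightarrow> nat \<Rightarrow> 'a list" where
  "window \<omega> n = map (\<lambda>i. \<omega> (int i + 1)) [0..<n]"

definition marg :: "(int \<Rightarrow> 'a) measure \<Rightarrow> nat \<Rightarrow> 'a list set \<Rightarrow> real" where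
  "marg P n C = measure P {\<omega> \<in> space P. window \<omega> n \<in> C}"

definition Bstar_props ::
  "(int \<Rightarrow> 'a) measure \<Rightarrow> 'a set \<Rightarrow> real \<Rightarrow> real \<Rightarrow> (nat \<Rightarrow> 'a list set) \<Rightarrow> nat \<Rightarrow> bool" where
  "Bstar_props P A h \<epsilon> C N \<longleftrightarrow>
     (\<forall>n\<ge>1. C n \<subseteq> words A n) \<and>
     (\<forall>n\<ge>1. C n = butlast ` C (Suc n)) \<and>
     (\<forall>n\<ge>N. n \<ge> 1 \<longrightarrow> exp (real n * (h - \<epsilon>)) < real (card (C n)) \<and>
                         real (card (C n)) < exp (real n * (h + \<epsilon>))) \<and>
     (\<forall>n\<ge>N. n \<ge> 1 \<longrightarrow> (\<forall>x\<in>C n. marg P n {x} < exp (- real n * (h - \<epsilon>)))) \<and>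
     (\<forall>n\<ge>1. marg P n (C n) > 1 - \<epsilon>)"

definition condition_Bstar :: "(int \<Rightarrow> 'a) measure \<Rightarrow> 'a set \<Rightarrow> real \<Rightarrow> bool" where
  "condition_Bstar P A h \<longleftrightarrow> (\<forall>\<epsilon>>0. \<exists>C N. Bstar_props P A h \<epsilon> C N)"

end

theory Submission
  imports Defs
begin

lemma words_finite: "finite A \<Longrightarrow> finite (words A n)"
  unfolding words_def using finite_lists_length_eq[of A n] by (simp add: conj_commute)

lemma win_Suc: "window \<omega> (Suc n) = window \<omega> n @ [\<omega> (int n + 1)]"
  by (simp add: window_def)

lemma win_butlast: "butlast (window \<omega> (Suc n)) = window \<omega> n"
  by (simp add: win_Suc)

lemma win_words:
  assumes "space P = space (PiM (UNIV :: int set) (\<lambda>_. count_space A))" "\<omega> \<in> space P"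
  shows "window \<omega> n \<in> words A n"
  using assms by (auto simp: words_def window_def space_PiM PiE_iff)

lemma win_meas1:
  assumes "sets P = sets (PiM (UNIV :: int set) (\<lambda>_. count_space A))"
    and "space P = space (PiM (UNIV :: int set) (\<lambda>_. count_space A))"
  shows "{\<omega> \<in> space P. window \<omega> n = x} \<in> sets P"
proof -
  have comp: "{\<omega> \<in> space P. \<omega> j = a} \<in> sets P" for j a
  proof -
    have m: "(\<lambda>\<omega>. \<omega> j) \<in> measurable P (count_space A)"
      using measurable_component_singleton[of j UNIV "\<lambda>_. count_space A"]
        measurable_cong_sets[OF assms(1) refl, of "count_space A"] by simp
    have "(\<lambda>\<omega>. \<omega> j) -` ({a} \<inter> A) \<inter> space P \<in> sets P"
      by (rule measurable_sets[OF m]) simp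
    moreover have "{\<omega> \<in> space P. \<omega> j = a} = (\<lambda>\<omega>. \<omega> j) -` ({a} \<inter> A) \<inter> space P"
      using measurable_space[OF m] by auto
    ultimately show ?thesis by simp
  qed
  show ?thesis
  proof (induction n arbitrary: x)
    case 0
    then show ?case by (cases "x = []") (auto simp: window_def)
  next
    case (Suc n)
    show ?case
    proof (cases "x = []")
      case True
      then show ?thesis by (simp add: window_def)
    next
      case False
      have "{\<omega> \<in> space P. window \<omega> (Suc n) = x} =
          {\<omega> \<in> space P. window \<omega> n = butlast x} \<inter> {\<omega> \<in> space P. \<omega> (int n + 1) = last x}"
      proof -
        have "window \<omega> (Suc n) = x \<longleftrightarrow> window \<omega> n = butlast x \<and> \<omega> (int n + 1) = last x" for \<omega>
          using False append_butlast_last_id[OF False] unfolding win_Suc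
          by (metis butlast_snoc last_snoc)
        then show ?thesis by auto
      qed
      then show ?thesis using Suc comp by auto
    qed
  qed
qed

lemma win_meas:
  assumes "sets P = sets (PiM (UNIV :: int set) (\<lambda>_. count_space A))"
    and "space P = space (PiM (UNIV :: int set) (\<lambda>_. count_space A))"
    and "finite A"
  shows "{\<omega> \<in> space P. window \<omega> n \<in> S} \<in> sets P"
proof -
  have "{\<omega> \<in> space P. window \<omega> n \<in> S} = (\<Union>x\<in>S \<inter> words A n. {\<omega> \<in> space P. window \<omega> n = x})"
    using win_words[OF assms(2)] by auto
  moreover have "finite (S \<inter> words A n)" using words_finite[OF assms(3)] by auto
  ultimately show ?thesis using win_meas1[OF assms(1,2)] by (auto intro!: sets.finite_UN)
qed

lemma marg_sum:
  assumes "prob_space P"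
    and "sets P = sets (PiM (UNIV :: int set) (\<lambda>_. count_space A))"
    and "space P = space (PiM (UNIV :: int set) (\<lambda>_. count_space A))"
    and "finite S"
  shows "marg P n S = (\<Sum>x\<in>S. marg P n {x})"
proof -
  interpret prob_space P by fact
  have "{\<omega> \<in> space P. window \<omega> n \<in> S} = (\<Union>x\<in>S. {\<omega> \<in> space P. window \<omega> n = x})" by auto
  moreover have "measure P (\<Union>x\<in>S. {\<omega> \<in> space P. window \<omega> n = x}) =
      (\<Sum>x\<in>S. measure P {\<omega> \<in> space P. window \<omega> n = x})"
    using win_meas1[OF assms(2,3)] assms(4)
    by (intro finite_measure_finite_Union) (auto simp: disjoint_family_on_def)
  ultimately show ?thesis unfolding marg_def by simp
qed

theorem mainTheorem2:
  fixes A :: "'a set" and h :: real and P :: "(int \<Rightarrow> 'a) measure"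
  assumes "finite A" and "h \<ge> 0"
    and "prob_space P"
    and "sets P = sets (PiM (UNIV :: int set) (\<lambda>_. count_space A))"
    and "space P = space (PiM (UNIV :: int set) (\<lambda>_. count_space A))"
    and "condition_Bstar P A h"
  shows "\<forall>\<epsilon>>0. \<exists>C N. Bstar_props P A h \<epsilon> C N \<and>
           (\<forall>n\<ge>N. n \<ge> 1 \<longrightarrow> (\<forall>x\<in>C n.
              exp (- real n * (h + \<epsilon>)) < marg P n {x} \<and>
              marg P n {x} < exp (- real n * (h - \<epsilon>))))"
proof (intro allI impI)
  fix \<epsilon> :: real assume \<epsilon>: "\<epsilon> > 0"
  interpret prob_space P by fact
  define \<delta> where "\<delta> = min (\<epsilon>/3) (1/4)"
  have \<delta>: "\<delta> > 0" "\<delta> \<le> \<epsilon>/3" "\<delta> \<le> 1/4" using \<epsilon> by (auto simp: \<delta>_def)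
  obtain C N where CN: "Bstar_props P A h \<delta> C N"
    using assms(6) \<delta>(1) unfolding condition_Bstar_def by blast
  have C1: "\<forall>n\<ge>1. C n \<subseteq> words A n" and C2: "\<forall>n\<ge>1. C n = butlast ` C (Suc n)"
    and C3: "\<forall>n\<ge>N. n \<ge> 1 \<longrightarrow> exp (real n * (h - \<delta>)) < real (card (C n)) \<and>
                         real (card (C n)) < exp (real n * (h + \<delta>))"
    and C4: "\<forall>n\<ge>N. n \<ge> 1 \<longrightarrow> (\<forall>x\<in>C n. marg P n {x} < exp (- real n * (h - \<delta>)))"
    and C5: "\<forall>n\<ge>1. marg P n (C n) > 1 - \<delta>"
    using CN unfolding Bstar_props_def by blast+
  define \<rho> where "\<rho> = \<epsilon> - \<delta>"
  have \<rho>: "\<rho> > 0" using \<delta> \<epsilon> by (simp add: \<rho>_def)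
  define q where "q = exp (- \<rho>)"
  have q: "0 < q" "q < 1" using \<rho> by (auto simp: q_def)
  have "(\<lambda>m. q ^ m) \<longlonglongrightarrow> 0" using q by (intro LIMSEQ_power_zero) simp
  moreover have "\<delta> * (1 - q) > 0" using q \<delta> by simp
  ultimately have "eventually (\<lambda>m. q ^ m < \<delta> * (1 - q)) sequentially"
    by (rule order_tendstoD(2))
  then obtain M0 where M0: "\<And>m. m \<ge> M0 \<Longrightarrow> q ^ m < \<delta> * (1 - q)"
    unfolding eventually_sequentially by blast
  define M where "M = max (max N 1) (max M0 (nat \<lceil>1/\<rho>\<rceil> + 1))"
  have M: "M \<ge> N" "M \<ge> 1" "M \<ge> M0" by (auto simp: M_def)
  have "real M > 1/\<rho>"
  proof -
    have "real (nat \<lceil>1/\<rho>\<rceil> + 1) > 1/\<rho>" by linarith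
    moreover have "M \<ge> nat \<lceil>1/\<rho>\<rceil> + 1" by (simp add: M_def)
    ultimately show ?thesis by linarith
  qed
  then have M\<rho>: "real M * \<rho> > 1" using \<rho> by (simp add: field_simps)
  define G where "G k = (if k < M then C k else {x\<in>C k. exp (- real k * (h+\<epsilon>)) < marg P k {x}})" for k
  define T where "T = {\<omega>\<in>space P. \<forall>k\<ge>1. window \<omega> k \<in> G k}"
  define D where "D n = (\<lambda>\<omega>. window \<omega> n) ` T" for n
  have GC: "G k \<subseteq> C k" for k by (auto simp: G_def)
  have meas: "{\<omega>\<in>space P. window \<omega> n \<in> S} \<in> sets P" for n S
    by (rule win_meas[OF assms(4,5,1)])
  have finC: "finite (C n)" if "n \<ge> 1" for n
    using C1 that words_finite[OF assms(1)] finite_subset by blast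
  have pre: "window \<omega> n \<in> C n" if "n \<ge> 1" "window \<omega> (Suc n) \<in> C (Suc n)" for \<omega> n
  proof -
    have "window \<omega> n = butlast (window \<omega> (Suc n))" by (simp add: win_butlast)
    moreover have e: "C n = butlast ` C (Suc n)" using C2 that(1) by blast
    ultimately show ?thesis using that(2) by (metis image_eqI)
  qed
  have DG: "D n \<subseteq> G n" if "n \<ge> 1" for n using that by (auto simp: D_def T_def)
  have DC: "D n \<subseteq> C n" if "n \<ge> 1" for n using DG[OF that] GC by blast
  have finD: "finite (D n)" if "n \<ge> 1" for n using DC[OF that] finC[OF that] finite_subset by blast
  define E where "E i = {\<omega>\<in>space P. window \<omega> (Suc i) \<in> - C (Suc i)}" for i
  define B where "B i = {\<omega>\<in>space P. window \<omega> (M+i) \<in> C (M+i) - G (M+i)}" for i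
  have Esets: "range E \<subseteq> sets P" using meas by (auto simp: E_def)
  have Bsets: "range B \<subseteq> sets P" using meas by (auto simp: B_def)
  have Einc: "incseq E"
  proof (rule incseq_SucI)
    fix i show "E i \<subseteq> E (Suc i)" using pre[of "Suc i"] by (auto simp: E_def)
  qed
  have Emeas: "measure P (E i) < \<delta>" for i
  proof -
    have "E i = space P - {\<omega>\<in>space P. window \<omega> (Suc i) \<in> C (Suc i)}" by (auto simp: E_def)
    then have "measure P (E i) = 1 - marg P (Suc i) (C (Suc i))"
      using prob_compl[OF meas] by (simp add: marg_def)
    moreover have "marg P (Suc i) (C (Suc i)) > 1 - \<delta>" using C5 by simp
    ultimately show ?thesis by linarith
  qed
  have Elim: "measure P (\<Union>(range E)) \<le> \<delta>"
    using LIMSEQ_le_const2[OF finite_Lim_measure_incseq[OF Esets Einc]] Emeas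
    by (meson less_imp_le)
  have Bmeas: "measure P (B i) \<le> q ^ M * q ^ i" for i
  proof -
    let ?k = "M + i"
    define S where "S = {x\<in>C ?k. marg P ?k {x} \<le> exp (- real ?k * (h+\<epsilon>))}"
    have k1: "?k \<ge> 1" "?k \<ge> N" using M by auto
    have finS: "finite S" using finC[OF k1(1)] by (simp add: S_def)
    have "B i = {\<omega>\<in>space P. window \<omega> ?k \<in> S}" by (auto simp: B_def S_def G_def)
    then have "measure P (B i) = marg P ?k S" by (simp add: marg_def)
    also have "\<dots> = (\<Sum>x\<in>S. marg P ?k {x})" by (rule marg_sum[OF assms(3,4,5) finS])
    also have "\<dots> \<le> (\<Sum>x\<in>S. exp (- real ?k * (h+\<epsilon>)))" by (rule sum_mono) (simp add: S_def)
    also have "\<dots> = real (card S) * exp (- real ?k * (h+\<epsilon>))" by simp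
    also have "\<dots> \<le> real (card (C ?k)) * exp (- real ?k * (h+\<epsilon>))"
      using card_mono[OF finC[OF k1(1)], of S] by (intro mult_right_mono) (auto simp: S_def)
    also have "\<dots> \<le> exp (real ?k * (h + \<delta>)) * exp (- real ?k * (h+\<epsilon>))"
      using C3 k1 by (intro mult_right_mono) (auto intro: less_imp_le)
    also have "\<dots> = exp (real ?k * (- \<rho>))"
      by (simp add: exp_add[symmetric] \<rho>_def algebra_simps)
    also have "\<dots> = q ^ ?k" unfolding q_def by (rule exp_of_nat_mult)
    also have "\<dots> = q ^ M * q ^ i" by (simp add: power_add)
    finally show ?thesis .
  qed
  have gsum: "summable (\<lambda>i. q ^ M * q ^ i)" using q by (intro summable_mult summable_geometric) simp
  have Bsum: "summable (\<lambda>i. measure P (B i))"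
    by (rule summable_comparison_test[OF _ gsum]) (use Bmeas in auto)
  have Blim: "measure P (\<Union>(range B)) \<le> \<delta>"
  proof -
    have "measure P (\<Union>(range B)) \<le> (\<Sum>i. measure P (B i))"
      by (rule finite_measure_subadditive_countably[OF Bsets Bsum])
    also have "\<dots> \<le> (\<Sum>i. q ^ M * q ^ i)" by (rule suminf_le[OF Bmeas Bsum gsum])
    also have "\<dots> = q ^ M * (1 / (1 - q))" using q by (simp add: suminf_mult suminf_geometric)
    also have "\<dots> \<le> \<delta>" using M0[OF M(3)] q by (simp add: field_simps)
    finally show ?thesis .
  qed
  have cover: "\<omega> \<in> \<Union>(range E) \<union> \<Union>(range B)" if om: "\<omega> \<in> space P" "window \<omega> n \<notin> D n" for \<omega> n
  proof -
    have "\<omega> \<notin> T" using that by (auto simp: D_def)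
    then obtain k where k: "k \<ge> 1" "window \<omega> k \<notin> G k" using om(1) by (auto simp: T_def)
    show ?thesis
    proof (cases "window \<omega> k \<in> C k")
      case False
      then have "\<omega> \<in> E (k - 1)" using k that(1) by (auto simp: E_def)
      then show ?thesis by auto
    next
      case True
      then have "k \<ge> M" using k by (auto simp: G_def split: if_splits)
      then have "\<omega> \<in> B (k - M)" using k True that(1) by (auto simp: B_def)
      then show ?thesis by auto
    qed
  qed
  have PD: "marg P n (D n) \<ge> 1 - 2 * \<delta>" for n
  proof -
    let ?S = "{\<omega>\<in>space P. window \<omega> n \<in> D n}"
    have "space P - ?S \<subseteq> \<Union>(range E) \<union> \<Union>(range B)" using cover by blast
    then have "measure P (space P - ?S) \<le> measure P (\<Union>(range E) \<union> \<Union>(range B))"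
      using Esets Bsets by (intro finite_measure_mono) auto
    also have "\<dots> \<le> measure P (\<Union>(range E)) + measure P (\<Union>(range B))"
      using Esets Bsets by (intro measure_Un_le) auto
    finally have "measure P (space P - ?S) \<le> 2 * \<delta>" using Elim Blim by linarith
    then show ?thesis using prob_compl[OF meas] by (simp add: marg_def)
  qed
  show "\<exists>C N. Bstar_props P A h \<epsilon> C N \<and>
           (\<forall>n\<ge>N. n \<ge> 1 \<longrightarrow> (\<forall>x\<in>C n.
              exp (- real n * (h + \<epsilon>)) < marg P n {x} \<and>
              marg P n {x} < exp (- real n * (h - \<epsilon>))))"
  proof (intro exI conjI)
    have a: "\<forall>n\<ge>1. D n \<subseteq> words A n" using DC C1 by blast
    have b: "\<forall>n\<ge>1. D n = butlast ` D (Suc n)"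
      by (simp add: D_def image_image win_butlast)
    have upper: "marg P n {x} < exp (- real n * (h - \<epsilon>))" if "n \<ge> M" "x \<in> D n" for n x
    proof -
      have n1: "n \<ge> 1" "n \<ge> N" using that M by auto
      have "marg P n {x} < exp (- real n * (h - \<delta>))" using C4 n1 DC[OF n1(1)] that(2) by blast
      also have "\<dots> \<le> exp (- real n * (h - \<epsilon>))" using \<delta> \<epsilon>
        by (simp add: mult_left_mono)
      finally show ?thesis .
    qed
    have c: "\<forall>n\<ge>M. n \<ge> 1 \<longrightarrow> exp (real n * (h - \<epsilon>)) < real (card (D n)) \<and>
                         real (card (D n)) < exp (real n * (h + \<epsilon>))"
    proof (intro allI impI conjI)
      fix n assume n: "n \<ge> M" "n \<ge> 1"
      have nN: "n \<ge> N" using n M by auto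
      have "real (card (D n)) \<le> real (card (C n))" using card_mono[OF finC DC] n by simp
      also have "\<dots> < exp (real n * (h + \<delta>))" using C3 n nN by blast
      also have "\<dots> \<le> exp (real n * (h + \<epsilon>))" using \<delta> \<epsilon> by (simp add: mult_left_mono)
      finally show "real (card (D n)) < exp (real n * (h + \<epsilon>))" .
      have "1/2 \<le> marg P n (D n)" using PD[of n] \<delta> by linarith
      also have "\<dots> = (\<Sum>x\<in>D n. marg P n {x})" by (rule marg_sum[OF assms(3,4,5) finD[OF n(2)]])
      also have "\<dots> \<le> (\<Sum>x\<in>D n. exp (- real n * (h - \<delta>)))"
        using C4 nN n DC[OF n(2)] by (intro sum_mono) (auto intro: less_imp_le)
      also have "\<dots> = real (card (D n)) * exp (- real n * (h - \<delta>))" by simp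
      finally have h1: "1/2 \<le> real (card (D n)) * exp (- real n * (h - \<delta>))" .
      have "exp (real n * (h - \<delta>)) = exp (real n * (h - \<epsilon>)) * exp (real n * \<rho>)"
        by (simp add: exp_add[symmetric] \<rho>_def algebra_simps)
      moreover have "exp (real n * \<rho>) > 2"
      proof -
        have "real n * \<rho> \<ge> real M * \<rho>" using n \<rho> by (simp add: mult_right_mono)
        then have "real n * \<rho> > 1" using M\<rho> by linarith
        then show ?thesis using exp_ge_add_one_self[of "real n * \<rho>"] by linarith
      qed
      ultimately have "exp (real n * (h - \<epsilon>)) * 2 < exp (real n * (h - \<delta>))"
        by (simp add: mult_strict_left_mono)
      also have "exp (real n * (h - \<delta>)) \<le> 2 * real (card (D n))"
      proof -
        have "exp (real n * (h - \<delta>)) * (1/2) \<le> exp (real n * (h - \<delta>)) * (real (card (D n)) * exp (- real n * (h - \<delta>)))"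
          using h1 by (intro mult_left_mono) auto
        also have "\<dots> = real (card (D n)) * (exp (real n * (h - \<delta>)) * exp (- real n * (h - \<delta>)))"
          by (simp only: ac_simps)
        also have "exp (real n * (h - \<delta>)) * exp (- real n * (h - \<delta>)) = 1"
          by (simp add: exp_add[symmetric])
        finally have "exp (real n * (h - \<delta>)) * (1/2) \<le> real (card (D n))" by simp
        then show ?thesis by simp
      qed
      finally show "exp (real n * (h - \<epsilon>)) < real (card (D n))" by simp
    qed
    have d: "\<forall>n\<ge>M. n \<ge> 1 \<longrightarrow> (\<forall>x\<in>D n. marg P n {x} < exp (- real n * (h - \<epsilon>)))"
      using upper by blast
    have e: "\<forall>n\<ge>1. marg P n (D n) > 1 - \<epsilon>"
    proof (intro allI impI)
      fix n :: nat
      show "marg P n (D n) > 1 - \<epsilon>" using PD[of n] \<delta> \<epsilon> by linarith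
    qed
    show "Bstar_props P A h \<epsilon> D M" unfolding Bstar_props_def using a b c d e by blast
    show "\<forall>n\<ge>M. n \<ge> 1 \<longrightarrow> (\<forall>x\<in>D n.
              exp (- real n * (h + \<epsilon>)) < marg P n {x} \<and>
              marg P n {x} < exp (- real n * (h - \<epsilon>)))"
    proof (intro allI impI ballI conjI)
      fix n x assume n: "n \<ge> M" "n \<ge> 1" and x: "x \<in> D n"
      show "marg P n {x} < exp (- real n * (h - \<epsilon>))" using upper n x by blast
      have "x \<in> G n" using DG[OF n(2)] x by blast
      then show "exp (- real n * (h + \<epsilon>)) < marg P n {x}" using n by (simp add: G_def)
    qed
  qed
qed

end
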